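(* For every integer $r \ge 2$, $\mathrm{gp_e}(Q_r) = 2^r$.
   Context: $Q_r$ is the $r$-dimensional hypercube: vertex set $\{0,1\}^r$, two vertices adjacent iff they differ in exactly one coordinate. A set $S$ of edges of a graph $G$ is an edge general position set if no geodesic (shortest path) of $G$ contains three edges of $S$; $\mathrm{gp_e}(G)$ is the maximum cardinality of an edge general position set of $G$. *)

theory Defs
  imports Main
begin

text \<open>A (simple, undirected) graph is given by a vertex set V and an adjacency
relation E (assumed symmetric and irreflexive where relevant).\<close>

definition graph_edges :: "'a set \<Rightarrow> ('a \<Rightarrow> 'a \<Rightarrow> bool) \<Rightarrow> 'a set set" where
  "graph_edges V E = {{u, v} | u v. u \<in> V \<and> v \<in> V \<and> E u v}"

definition is_walk :: "'a set \<Rightarrow> ('a \<Rightarrow> 'a \<Rightarrow> bool) \<Rightarrow> 'a list \<Rightarrow> bool" where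
  "is_walk V E p \<longleftrightarrow> p \<noteq> [] \<and> set p \<subseteq> V \<and> (\<forall>i. Suc i < length p \<longrightarrow> E (p ! i) (p ! Suc i))"

definition graph_dist :: "'a set \<Rightarrow> ('a \<Rightarrow> 'a \<Rightarrow> bool) \<Rightarrow> 'a \<Rightarrow> 'a \<Rightarrow> nat" where
  "graph_dist V E u v = (LEAST n. \<exists>p. is_walk V E p \<and> hd p = u \<and> last p = v \<and> length p = Suc n)"

definition is_geodesic :: "'a set \<Rightarrow> ('a \<Rightarrow> 'a \<Rightarrow> bool) \<Rightarrow> 'a list \<Rightarrow> bool" where
  "is_geodesic V E p \<longleftrightarrow> is_walk V E p \<and> length p = Suc (graph_dist V E (hd p) (last p))"

definition walk_edges :: "'a list \<Rightarrow> 'a set set" where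
  "walk_edges p = {{p ! i, p ! Suc i} | i. Suc i < length p}"

definition edge_gp_set :: "'a set \<Rightarrow> ('a \<Rightarrow> 'a \<Rightarrow> bool) \<Rightarrow> 'a set set \<Rightarrow> bool" where
  "edge_gp_set V E S \<longleftrightarrow> S \<subseteq> graph_edges V E \<and>
     (\<forall>p. is_geodesic V E p \<longrightarrow> card (S \<inter> walk_edges p) \<le> 2)"

definition gp_e :: "'a set \<Rightarrow> ('a \<Rightarrow> 'a \<Rightarrow> bool) \<Rightarrow> nat" where
  "gp_e V E = Max {card S | S. edge_gp_set V E S}"

definition hypercube_V :: "nat \<Rightarrow> bool list set" where
  "hypercube_V r = {xs. length xs = r}"

definition hypercube_E :: "nat \<Rightarrow> bool list \<Rightarrow> bool list \<Rightarrow> bool" where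
  "hypercube_E r xs ys \<longleftrightarrow> card {i. i < r \<and> xs ! i \<noteq> ys ! i} = 1"

end

theory Submission
  imports Defs
begin

definition ham :: "nat \<Rightarrow> bool list \<Rightarrow> bool list \<Rightarrow> nat" where
  "ham r x y = card {i. i < r \<and> x ! i \<noteq> y ! i}"

definition flp :: "nat \<Rightarrow> bool list \<Rightarrow> bool list" where
  "flp i x = x[i := (\<not> x ! i)]"

definition pv :: "nat \<Rightarrow> bool list \<Rightarrow> nat \<Rightarrow> bool list" where
  "pv r u k = map (\<lambda>j. if j < k then \<not> u ! j else u ! j) [0..<r]"

definition pth :: "nat \<Rightarrow> bool list \<Rightarrow> bool list list" where
  "pth r u = map (pv r u) [0..<Suc r]"

lemma hE_ham: "hypercube_E r x y \<longleftrightarrow> ham r x y = 1"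
  by (simp add: hypercube_E_def ham_def)

lemma ham_sym: "ham r x y = ham r y x"
  unfolding ham_def by (metis (no_types, lifting))

lemma ham_self[simp]: "ham r x x = 0"
  unfolding ham_def by simp

lemma ham_tri: "ham r x z \<le> ham r x y + ham r y z"
proof -
  have "{i. i < r \<and> x ! i \<noteq> z ! i} \<subseteq> {i. i < r \<and> x ! i \<noteq> y ! i} \<union> {i. i < r \<and> y ! i \<noteq> z ! i}"
    by auto
  then have "ham r x z \<le> card ({i. i < r \<and> x ! i \<noteq> y ! i} \<union> {i. i < r \<and> y ! i \<noteq> z ! i})"
    unfolding ham_def by (intro card_mono) auto
  also have "\<dots> \<le> ham r x y + ham r y z" unfolding ham_def by (rule card_Un_le)
  finally show ?thesis .
qed

lemma ham_zero:
  assumes "length x = r" "length y = r" "ham r x y = 0"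
  shows "x = y"
proof -
  have "finite {i. i < r \<and> x ! i \<noteq> y ! i}" by simp
  then have "{i. i < r \<and> x ! i \<noteq> y ! i} = {}" using assms(3) unfolding ham_def by simp
  then show ?thesis using assms by (intro nth_equalityI) auto
qed

lemma is_walk_Cons:
  "is_walk V E (a # q) \<longleftrightarrow> a \<in> V \<and> (q = [] \<or> (E a (hd q) \<and> is_walk V E q))"
proof (cases q)
  case Nil
  then show ?thesis by (simp add: is_walk_def)
next
  case (Cons b q')
  show ?thesis
  proof
    assume w: "is_walk V E (a # q)"
    have "E a (hd q)" using w Cons unfolding is_walk_def by (metis list.sel(1) length_Cons nth_Cons_0 nth_Cons_Suc zero_less_Suc Suc_less_eq)
    moreover have "is_walk V E q" using w Cons unfolding is_walk_def
      by (auto simp del: nth_Cons_Suc)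
    ultimately show "a \<in> V \<and> (q = [] \<or> (E a (hd q) \<and> is_walk V E q))" using w unfolding is_walk_def by auto
  next
    assume h: "a \<in> V \<and> (q = [] \<or> (E a (hd q) \<and> is_walk V E q))"
    then have e: "E a b" and w: "is_walk V E q" using Cons by auto
    show "is_walk V E (a # q)" unfolding is_walk_def
    proof (intro conjI allI impI)
      show "set (a # q) \<subseteq> V" using h w unfolding is_walk_def by auto
      fix i assume "Suc i < length (a # q)"
      then show "E ((a # q) ! i) ((a # q) ! Suc i)"
        using e w Cons unfolding is_walk_def by (cases i) auto
    qed simp
  qed
qed

lemma walk_ham:
  assumes w: "is_walk (hypercube_V r) (hypercube_E r) p" and ab: "a \<le> b" and bl: "b < length p"
  shows "ham r (p ! a) (p ! b) \<le> b - a"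
  using ab bl
proof (induction b)
  case 0
  then show ?case by simp
next
  case (Suc b)
  show ?case
  proof (cases "a = Suc b")
    case True
    then show ?thesis by simp
  next
    case False
    then have ab: "a \<le> b" using Suc.prems by simp
    have ih: "ham r (p ! a) (p ! b) \<le> b - a" using Suc ab by simp
    have "hypercube_E r (p ! b) (p ! Suc b)" using w Suc.prems unfolding is_walk_def by blast
    then have "ham r (p ! b) (p ! Suc b) = 1" by (simp add: hE_ham)
    then show ?thesis using ih ham_tri[of r "p ! a" "p ! Suc b" "p ! b"] ab by linarith
  qed
qed

lemma walk_exists:
  "length u = r \<Longrightarrow> length v = r \<Longrightarrow> ham r u v = n \<Longrightarrow>
   \<exists>p. is_walk (hypercube_V r) (hypercube_E r) p \<and> hd p = u \<and> last p = v \<and> length p = Suc n"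
proof (induction n arbitrary: u)
  case 0
  then have "u = v" using ham_zero by blast
  then show ?case using 0 by (intro exI[of _ "[u]"]) (auto simp: is_walk_def hypercube_V_def)
next
  case (Suc n)
  let ?D = "{i. i < r \<and> u ! i \<noteq> v ! i}"
  have "?D \<noteq> {}" using Suc.prems unfolding ham_def by (metis card.empty nat.distinct(1))
  then obtain i where i: "i < r" "u ! i \<noteq> v ! i" by blast
  define u' where "u' = u[i := v ! i]"
  have lu': "length u' = r" using Suc.prems by (simp add: u'_def)
  have "{j. j < r \<and> u' ! j \<noteq> v ! j} = ?D - {i}"
    using i Suc.prems by (auto simp: u'_def nth_list_update)
  then have "ham r u' v = n" using Suc.prems i unfolding ham_def by simp
  then obtain p where p: "is_walk (hypercube_V r) (hypercube_E r) p" "hd p = u'" "last p = v" "length p = Suc n"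
    using Suc.IH lu' Suc.prems by blast
  have "{j. j < r \<and> u ! j \<noteq> u' ! j} = {i}"
    using i Suc.prems by (auto simp: u'_def nth_list_update)
  then have "hypercube_E r u u'" by (simp add: hE_ham ham_def)
  moreover have "p \<noteq> []" using p by auto
  ultimately show ?case using p Suc.prems
    by (intro exI[of _ "u # p"]) (auto simp: is_walk_Cons hypercube_V_def)
qed

lemma dist_le_ham:
  assumes "length u = r" "length v = r"
  shows "graph_dist (hypercube_V r) (hypercube_E r) u v \<le> ham r u v"
  unfolding graph_dist_def using walk_exists[OF assms refl] by (intro Least_le) 

lemma walk_ham_ends:
  assumes w: "is_walk (hypercube_V r) (hypercube_E r) p"
  shows "ham r (hd p) (last p) \<le> length p - 1"
proof -
  have "p \<noteq> []" using w unfolding is_walk_def by auto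
  then show ?thesis using walk_ham[OF w, of 0 "length p - 1"] by (simp add: hd_conv_nth last_conv_nth)
qed

lemma geodesic_ham:
  assumes g: "is_geodesic (hypercube_V r) (hypercube_E r) p"
  shows "length p = Suc (ham r (hd p) (last p))"
proof -
  have w: "is_walk (hypercube_V r) (hypercube_E r) p" using g unfolding is_geodesic_def by simp
  have ne: "p \<noteq> []" using w unfolding is_walk_def by auto
  have "hd p \<in> hypercube_V r" "last p \<in> hypercube_V r" using w ne unfolding is_walk_def by auto
  then have "graph_dist (hypercube_V r) (hypercube_E r) (hd p) (last p) \<le> ham r (hd p) (last p)"
    by (intro dist_le_ham) (auto simp: hypercube_V_def)
  then show ?thesis using g walk_ham_ends[OF w] ne unfolding is_geodesic_def by (cases p) auto
qed

definition dset :: "nat \<Rightarrow> bool list \<Rightarrow> bool list \<Rightarrow> nat set" where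
  "dset r x y = {i. i < r \<and> x ! i \<noteq> y ! i}"

lemma dset_sym: "dset r x y = dset r y x"
  unfolding dset_def by auto

lemma dset_pair: "{a, b} = {c, e} \<Longrightarrow> dset r a b = dset r c e"
  by (metis doubleton_eq_iff dset_sym)

lemma length_flp[simp]: "length (flp d x) = length x"
  by (simp add: flp_def)

lemma flp_beyond: "\<not> d < length x \<Longrightarrow> flp d x = x"
  by (simp add: flp_def list_update_beyond)

lemma flp_nth: "flp d x ! i = (if i = d \<and> d < length x then \<not> x ! d else x ! i)"
proof (cases "d < length x")
  case True
  then show ?thesis by (simp add: flp_def nth_list_update)
next
  case False
  then show ?thesis by (simp add: flp_beyond)
qed

lemma flp_flp[simp]: "flp d (flp d x) = x"
proof (cases "d < length x")
  case True
  then show ?thesis by (simp add: flp_def)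
next
  case False
  then show ?thesis by (simp add: flp_beyond)
qed

lemma dset_flp: "length x = r \<Longrightarrow> d < r \<Longrightarrow> dset r x (flp d x) = {d}"
  unfolding dset_def by (auto simp: flp_nth)

lemma hcard_V: "card (hypercube_V r) = 2 ^ r"
proof -
  have "hypercube_V r = {xs. set xs \<subseteq> (UNIV :: bool set) \<and> length xs = r}"
    by (auto simp: hypercube_V_def)
  then show ?thesis using card_lists_length_eq[of "UNIV :: bool set" r] by simp
qed

lemma finite_V: "finite (hypercube_V r)"
proof -
  have "hypercube_V r = {xs. set xs \<subseteq> (UNIV :: bool set) \<and> length xs = r}"
    by (auto simp: hypercube_V_def)
  then show ?thesis using finite_lists_length_eq[of "UNIV :: bool set" r] by simp
qed

lemma card_half:
  assumes d: "d < r"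
  shows "card {x. length x = r \<and> \<not> x ! d} = 2 ^ (r - 1)"
proof -
  let ?A = "{x. length x = r \<and> \<not> x ! d}"
  have un: "hypercube_V r = ?A \<union> flp d ` ?A"
  proof
    show "hypercube_V r \<subseteq> ?A \<union> flp d ` ?A"
    proof
      fix x assume x: "x \<in> hypercube_V r"
      show "x \<in> ?A \<union> flp d ` ?A"
      proof (cases "x ! d")
        case True
        then have "flp d x \<in> ?A" using x d by (auto simp: hypercube_V_def flp_nth)
        then have "flp d (flp d x) \<in> flp d ` ?A" by blast
        then show ?thesis by simp
      next
        case False
        then show ?thesis using x by (auto simp: hypercube_V_def)
      qed
    qed
  qed (auto simp: hypercube_V_def)
  have fin: "finite ?A" by (rule finite_subset[OF _ finite_V[of r]]) (auto simp: hypercube_V_def)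
  have disj: "?A \<inter> flp d ` ?A = {}"
  proof (rule ccontr)
    assume "?A \<inter> flp d ` ?A \<noteq> {}"
    then obtain y where y: "y \<in> ?A" "flp d y \<in> ?A" by blast
    then show False using d flp_nth[of d y d] by simp
  qed
  have inj: "inj_on (flp d) ?A" by (rule inj_on_inverseI[of _ "flp d"]) simp
  have "2 ^ r = card ?A + card (flp d ` ?A)"
    using hcard_V[of r] un card_Un_disjoint[OF fin _ disj] fin by simp
  also have "\<dots> = 2 * card ?A" using card_image[OF inj] by simp
  finally have "2 * card ?A = 2 ^ r" by simp
  moreover have "(2::nat) ^ r = 2 * 2 ^ (r - 1)" using d by (cases r) auto
  ultimately show ?thesis by simp
qed

definition S0 :: "nat \<Rightarrow> bool list set set" where
  "S0 r = {{x, flp d x} | x d. length x = r \<and> d < (2::nat)}"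

lemma ham_dset: "ham r x y = card (dset r x y)"
  by (simp add: ham_def dset_def)

lemma S0_edges:
  assumes "r \<ge> 2"
  shows "S0 r \<subseteq> graph_edges (hypercube_V r) (hypercube_E r)"
proof
  fix e assume "e \<in> S0 r"
  then obtain x d where e: "e = {x, flp d x}" "length x = r" "d < 2" unfolding S0_def by blast
  have "hypercube_E r x (flp d x)" using e assms by (simp add: hE_ham ham_dset dset_flp)
  then show "e \<in> graph_edges (hypercube_V r) (hypercube_E r)"
  proof -
    have "x \<in> hypercube_V r" "flp d x \<in> hypercube_V r" using e by (auto simp: hypercube_V_def)
    then show ?thesis unfolding graph_edges_def using e(1) \<open>hypercube_E r x (flp d x)\<close>
      by (intro CollectI exI[of _ x] exI[of _ "flp d x"]) simp
  qed
qed

lemma card_S0: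
  assumes r: "r \<ge> 2"
  shows "card (S0 r) = 2 ^ r"
proof -
  define T where "T = (SIGMA d:{..<2::nat}. {x. length x = r \<and> \<not> x ! d})"
  define f where "f = (\<lambda>(d::nat, x). {x, flp d x})"
  have inj: "inj_on f T"
  proof (rule inj_onI)
    fix a b assume a: "a \<in> T" and b: "b \<in> T" and fab: "f a = f b"
    obtain d x where a': "a = (d, x)" by (cases a)
    obtain d' x' where b': "b = (d', x')" by (cases b)
    have h: "{x, flp d x} = {x', flp d' x'}" using fab a' b' by (simp add: f_def)
    have dd: "d < r" "d' < r" "length x = r" "length x' = r" "\<not> x ! d" "\<not> x' ! d'"
      using a b a' b' r unfolding T_def by auto
    have "{d} = {d'}" using dset_pair[OF h, of r] dset_flp dd by metis
    then have "d = d'" by simp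
    moreover have "x = x'"
    proof (rule ccontr)
      assume "x \<noteq> x'"
      then have "x = flp d' x'" using h by (metis doubleton_eq_iff)
      then show False using dd flp_nth[of d' x' d'] \<open>d = d'\<close> by simp
    qed
    ultimately show "a = b" using a' b' by simp
  qed
  have img: "f ` T = S0 r"
  proof
    show "f ` T \<subseteq> S0 r" unfolding T_def f_def S0_def by auto
  next
    show "S0 r \<subseteq> f ` T"
    proof
      fix e assume "e \<in> S0 r"
      then obtain x d where e: "e = {x, flp d x}" "length x = r" "d < 2" unfolding S0_def by blast
      show "e \<in> f ` T"
      proof (cases "x ! d")
        case False
        then have "(d, x) \<in> T" using e unfolding T_def by auto
        then show ?thesis using e by (auto simp: f_def)
      next
        case True
        then have "(d, flp d x) \<in> T" using e r flp_nth[of d x d] unfolding T_def by auto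
        moreover have "f (d, flp d x) = e" using e by (auto simp: f_def)
        ultimately show ?thesis by force
      qed
    qed
  qed
  have "card T = (\<Sum>d<2. card {x. length x = r \<and> \<not> x ! d})"
    unfolding T_def by (rule card_SigmaI) (auto intro: finite_subset[OF _ finite_V[of r]] simp: hypercube_V_def)
  also have "\<dots> = (\<Sum>d<(2::nat). 2 ^ (r - 1))" using r by (intro sum.cong) (auto simp: card_half)
  also have "\<dots> = 2 ^ r" using r by (cases r) auto
  finally show ?thesis using card_image[OF inj] img by simp
qed

lemma walk_len:
  assumes "is_walk (hypercube_V r) (hypercube_E r) p" "i < length p"
  shows "length (p ! i) = r"
proof -
  have "p ! i \<in> set p" using assms(2) by (rule nth_mem)
  then show ?thesis using assms(1) unfolding is_walk_def hypercube_V_def by blast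
qed

lemma no_repeat:
  assumes g: "is_geodesic (hypercube_V r) (hypercube_E r) p"
    and jk: "j < k" "Suc k < length p"
    and dj: "dset r (p ! j) (p ! Suc j) = {d}" and dk: "dset r (p ! k) (p ! Suc k) = {d}"
  shows False
proof -
  have w: "is_walk (hypercube_V r) (hypercube_E r) p" using g unfolding is_geodesic_def by simp
  have ne: "p \<noteq> []" using w unfolding is_walk_def by auto
  define n where "n = length p - 1"
  have h1: "ham r (p ! 0) (p ! n) = n"
    using geodesic_ham[OF g] ne by (simp add: hd_conv_nth last_conv_nth n_def)
  have dr: "d < r" using dj unfolding dset_def by blast
  have a1: "\<And>i. i < r \<Longrightarrow> i \<noteq> d \<Longrightarrow> p ! j ! i = p ! Suc j ! i" using dj unfolding dset_def by blast
  have a2: "p ! j ! d \<noteq> p ! Suc j ! d" using dj unfolding dset_def by blast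
  have b1: "\<And>i. i < r \<Longrightarrow> i \<noteq> d \<Longrightarrow> p ! k ! i = p ! Suc k ! i" using dk unfolding dset_def by blast
  have b2: "p ! k ! d \<noteq> p ! Suc k ! d" using dk unfolding dset_def by blast
  have "{i. i < r \<and> p ! j ! i \<noteq> p ! Suc k ! i} = {i. i < r \<and> p ! Suc j ! i \<noteq> p ! k ! i}"
  proof (rule set_eqI)
    fix i
    show "(i \<in> {i. i < r \<and> p ! j ! i \<noteq> p ! Suc k ! i}) = (i \<in> {i. i < r \<and> p ! Suc j ! i \<noteq> p ! k ! i})"
    proof (cases "i = d")
      case True
      then show ?thesis using a2 b2 dr by auto
    next
      case False
      then show ?thesis using a1[of i] b1[of i] by auto
    qed
  qed
  then have e: "ham r (p ! j) (p ! Suc k) = ham r (p ! Suc j) (p ! k)" by (simp add: ham_def)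
  have "ham r (p ! Suc j) (p ! k) \<le> k - Suc j" using walk_ham[OF w, of "Suc j" k] jk by simp
  moreover have "ham r (p ! 0) (p ! j) \<le> j" using walk_ham[OF w, of 0 j] jk by simp
  moreover have "ham r (p ! Suc k) (p ! n) \<le> n - Suc k" using walk_ham[OF w, of "Suc k" n] jk n_def by simp
  moreover have "ham r (p ! 0) (p ! n) \<le> ham r (p ! 0) (p ! j) + ham r (p ! j) (p ! n)" by (rule ham_tri)
  moreover have "ham r (p ! j) (p ! n) \<le> ham r (p ! j) (p ! Suc k) + ham r (p ! Suc k) (p ! n)" by (rule ham_tri)
  ultimately show False using h1 e jk n_def by linarith
qed

lemma dir_unique:
  assumes g: "is_geodesic (hypercube_V r) (hypercube_E r) p"
  shows "card {e. \<exists>j. Suc j < length p \<and> e = {p ! j, p ! Suc j} \<and> dset r (p ! j) (p ! Suc j) = {d}} \<le> 1"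
    (is "card ?A \<le> 1")
proof -
  have fin: "finite ?A"
    by (rule finite_subset[of _ "(\<lambda>j. {p ! j, p ! Suc j}) ` {..<length p}"]) auto
  have "\<forall>a\<in>?A. \<forall>b\<in>?A. a = b"
  proof (intro ballI)
    fix a b assume a: "a \<in> ?A" and b: "b \<in> ?A"
    obtain j1 where j1: "Suc j1 < length p" "a = {p ! j1, p ! Suc j1}" "dset r (p ! j1) (p ! Suc j1) = {d}"
      using a by blast
    obtain j2 where j2: "Suc j2 < length p" "b = {p ! j2, p ! Suc j2}" "dset r (p ! j2) (p ! Suc j2) = {d}"
      using b by blast
    consider "j1 = j2" | "j1 < j2" | "j2 < j1" by linarith
    then show "a = b"
    proof cases
      case 1 then show ?thesis using j1 j2 by simp
    next
      case 2 then show ?thesis using no_repeat[OF g 2 j2(1) j1(3) j2(3)] by simp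
    next
      case 3 then show ?thesis using no_repeat[OF g 3 j1(1) j2(3) j1(3)] by simp
    qed
  qed
  then show ?thesis using card_le_Suc0_iff_eq[OF fin] by simp
qed

lemma S0_gp:
  assumes r: "r \<ge> 2" and g: "is_geodesic (hypercube_V r) (hypercube_E r) p"
  shows "card (S0 r \<inter> walk_edges p) \<le> 2"
proof -
  define A where "A d = {e. \<exists>j. Suc j < length p \<and> e = {p ! j, p ! Suc j} \<and> dset r (p ! j) (p ! Suc j) = {d}}" for d
  have sub: "S0 r \<inter> walk_edges p \<subseteq> A 0 \<union> A 1"
  proof
    fix e assume e: "e \<in> S0 r \<inter> walk_edges p"
    then obtain x d where x: "e = {x, flp d x}" "length x = r" "d < 2" unfolding S0_def by blast
    obtain j where j: "Suc j < length p" "e = {p ! j, p ! Suc j}" using e unfolding walk_edges_def by blast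
    have "dset r (p ! j) (p ! Suc j) = {d}" using dset_pair[of "p ! j" "p ! Suc j" x "flp d x" r] j x dset_flp r by simp
    then have "e \<in> A d" unfolding A_def using j by blast
    moreover have "d = 0 \<or> d = 1" using x by auto
    ultimately show "e \<in> A 0 \<union> A 1" by blast
  qed
  have fin: "finite (A d)" for d
    unfolding A_def by (rule finite_subset[of _ "(\<lambda>j. {p ! j, p ! Suc j}) ` {..<length p}"]) auto
  have "card (S0 r \<inter> walk_edges p) \<le> card (A 0 \<union> A 1)" using sub fin by (intro card_mono) auto
  also have "\<dots> \<le> card (A 0) + card (A 1)" by (rule card_Un_le)
  also have "\<dots> \<le> 2" using dir_unique[OF g, of 0] dir_unique[OF g, of 1] unfolding A_def by simp
  finally show ?thesis .
qed

lemma S0_gpset: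
  assumes r: "r \<ge> 2"
  shows "edge_gp_set (hypercube_V r) (hypercube_E r) (S0 r)"
  unfolding edge_gp_set_def using S0_edges[OF r] S0_gp[OF r] by blast

lemma length_pv[simp]: "length (pv r u k) = r"
  by (simp add: pv_def)

lemma pv_nth[simp]: "j < r \<Longrightarrow> pv r u k ! j = (if j < k then \<not> u ! j else u ! j)"
  by (simp add: pv_def)

lemma pv_0: "length u = r \<Longrightarrow> pv r u 0 = u"
  by (intro nth_equalityI) auto

lemma pv_Suc: "k < r \<Longrightarrow> pv r u (Suc k) = flp k (pv r u k)"
  by (intro nth_equalityI) (auto simp: flp_nth)

lemma dset_pv: "k < r \<Longrightarrow> dset r (pv r u k) (pv r u (Suc k)) = {k}"
  unfolding dset_def by (auto split: if_splits)

lemma pv_pv: "length x = r \<Longrightarrow> pv r (pv r x i) i = x"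
  by (intro nth_equalityI) auto

lemma pv_pv_Suc: "length x = r \<Longrightarrow> i < r \<Longrightarrow> pv r (pv r x i) (Suc i) = flp i x"
  by (intro nth_equalityI) (auto simp: flp_nth)

lemma length_pth[simp]: "length (pth r u) = Suc r"
  by (simp add: pth_def)

lemma pth_nth[simp]: "k < Suc r \<Longrightarrow> pth r u ! k = pv r u k"
  unfolding pth_def by (simp del: upt_Suc)

lemma pth_walk: "is_walk (hypercube_V r) (hypercube_E r) (pth r u)"
  unfolding is_walk_def
proof (intro conjI allI impI)
  show "pth r u \<noteq> []" using length_pth[of r u] by (metis list.size(3) nat.distinct(1))
  show "set (pth r u) \<subseteq> hypercube_V r" unfolding pth_def hypercube_V_def by auto
  fix i assume "Suc i < length (pth r u)"
  then have i: "i < r" by simp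
  then show "hypercube_E r (pth r u ! i) (pth r u ! Suc i)"
    by (simp add: hE_ham ham_dset dset_pv)
qed

lemma pth_geodesic:
  assumes u: "length u = r"
  shows "is_geodesic (hypercube_V r) (hypercube_E r) (pth r u)"
proof -
  let ?V = "hypercube_V r" and ?E = "hypercube_E r"
  have ne: "pth r u \<noteq> []" using length_pth[of r u] by (metis list.size(3) nat.distinct(1))
  have hd: "hd (pth r u) = u" using u ne by (simp add: hd_conv_nth pv_0)
  have lst: "last (pth r u) = pv r u r" using ne by (simp add: last_conv_nth)
  let ?P = "\<lambda>n. \<exists>p. is_walk ?V ?E p \<and> hd p = u \<and> last p = pv r u r \<and> length p = Suc n"
  have ex: "?P r" using pth_walk hd lst by (intro exI[of _ "pth r u"]) simp
  have le: "graph_dist ?V ?E u (pv r u r) \<le> r" unfolding graph_dist_def using ex by (rule Least_le)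
  obtain q where q: "is_walk ?V ?E q" "hd q = u" "last q = pv r u r"
    "length q = Suc (graph_dist ?V ?E u (pv r u r))"
    using LeastI_ex[of ?P] ex unfolding graph_dist_def by blast
  have "{i. i < r \<and> u ! i \<noteq> pv r u r ! i} = {..<r}" by auto
  then have "ham r u (pv r u r) = r" by (simp add: ham_def)
  then have "r \<le> graph_dist ?V ?E u (pv r u r)" using walk_ham_ends[OF q(1)] q by simp
  then show ?thesis using le pth_walk hd lst unfolding is_geodesic_def by simp
qed

lemma pth_edge: "k < r \<Longrightarrow> {pv r u k, pv r u (Suc k)} \<in> walk_edges (pth r u)"
  unfolding walk_edges_def by (intro CollectI exI[of _ k]) simp

lemma finite_walk_edges: "finite (walk_edges p)"
  unfolding walk_edges_def
  by (rule finite_subset[of _ "(\<lambda>j. {p ! j, p ! Suc j}) ` {..<length p}"]) auto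

lemma finite_edges: "finite (graph_edges (hypercube_V r) (hypercube_E r))"
proof -
  have "graph_edges (hypercube_V r) (hypercube_E r) \<subseteq> Pow (hypercube_V r)"
    unfolding graph_edges_def by auto
  then show ?thesis using finite_V[of r] by (meson finite_Pow_iff finite_subset)
qed

lemma edge_form:
  assumes "e \<in> graph_edges (hypercube_V r) (hypercube_E r)"
  shows "\<exists>x i. length x = r \<and> i < r \<and> e = {x, flp i x}"
proof -
  obtain x y where xy: "e = {x, y}" "length x = r" "length y = r" "hypercube_E r x y"
    using assms unfolding graph_edges_def hypercube_V_def by blast
  have "card (dset r x y) = 1" using xy(4) by (simp add: hE_ham ham_dset)
  then obtain i where i: "dset r x y = {i}" by (rule card_1_singletonE)
  then have ir: "i < r" unfolding dset_def by blast
  have "y = flp i x"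
  proof (rule nth_equalityI)
    show "length y = length (flp i x)" using xy by simp
    fix j assume "j < length y"
    then have j: "j < r" using xy by simp
    show "y ! j = flp i x ! j"
    proof (cases "j = i")
      case True
      then have "x ! j \<noteq> y ! j" using i j unfolding dset_def by blast
      then show ?thesis using True xy ir by (auto simp: flp_nth)
    next
      case False
      then have "x ! j = y ! j" using i j unfolding dset_def by blast
      then show ?thesis using False by (simp add: flp_nth)
    qed
  qed
  then show ?thesis using xy ir by blast
qed

lemma upper:
  assumes S: "edge_gp_set (hypercube_V r) (hypercube_E r) S"
  shows "card S \<le> 2 ^ r"
proof -
  let ?V = "hypercube_V r"
  define ed where "ed u k = {pv r u k, pv r u (Suc k)}" for u k
  define K where "K u = {k. k < r \<and> ed u k \<in> S}" for u
  define P where "P = (SIGMA u:?V. K u)"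
  have Sg: "S \<subseteq> graph_edges ?V (hypercube_E r)" using S unfolding edge_gp_set_def by blast
  have finS: "finite S" using finite_subset[OF Sg finite_edges] .
  have finK: "finite (K u)" for u unfolding K_def by auto
  have finP: "finite P" unfolding P_def using finite_V finK by auto
  have Ku: "card (K u) \<le> 2" if u: "u \<in> ?V" for u
  proof -
    have inj: "inj_on (ed u) (K u)"
    proof (rule inj_onI)
      fix a b assume a: "a \<in> K u" and b: "b \<in> K u" and h: "ed u a = ed u b"
      have "{a} = {b}" using dset_pair[OF h[unfolded ed_def], of r] dset_pv a b unfolding K_def by auto
      then show "a = b" by simp
    qed
    have "ed u ` K u \<subseteq> S \<inter> walk_edges (pth r u)" using pth_edge unfolding K_def ed_def by auto
    then have "card (ed u ` K u) \<le> card (S \<inter> walk_edges (pth r u))"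
      using finS by (intro card_mono) auto
    also have "\<dots> \<le> 2" using S pth_geodesic[of u r] u unfolding edge_gp_set_def hypercube_V_def by auto
    finally show ?thesis using card_image[OF inj] by simp
  qed
  have "card P = (\<Sum>u\<in>?V. card (K u))" unfolding P_def using finite_V finK by simp
  also have "\<dots> \<le> card ?V * 2" using sum_bounded_above[of "hypercube_V r" "\<lambda>u. card (K u)" 2] Ku by simp
  finally have cP: "card P \<le> 2 * 2 ^ r" by (simp add: hcard_V)
  define F where "F e = {q \<in> P. ed (fst q) (snd q) = e}" for e
  have F2: "2 \<le> card (F e)" if e: "e \<in> S" for e
  proof -
    obtain x i where xi: "length x = r" "i < r" "e = {x, flp i x}" using edge_form e Sg by blast
    define u1 where "u1 = pv r x i"
    define u2 where "u2 = pv r (flp i x) i"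
    have "ed u1 i = e" using xi by (simp add: ed_def u1_def pv_pv pv_pv_Suc)
    moreover have "ed u2 i = e" using xi by (auto simp: ed_def u2_def pv_pv pv_pv_Suc)
    ultimately have "(u1, i) \<in> F e" "(u2, i) \<in> F e"
      using xi e unfolding F_def P_def K_def u1_def u2_def hypercube_V_def by auto
    moreover have "u1 \<noteq> u2"
    proof
      assume "u1 = u2"
      then have "u1 ! i = u2 ! i" by simp
      then show False using xi by (simp add: u1_def u2_def flp_nth)
    qed
    ultimately have "{(u1, i), (u2, i)} \<subseteq> F e" by auto
    moreover have "finite (F e)" using finP unfolding F_def by auto
    ultimately have "card {(u1, i), (u2, i)} \<le> card (F e)" by (rule card_mono[rotated])
    then show ?thesis using \<open>u1 \<noteq> u2\<close> by simp
  qed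
  have "2 * card S = (\<Sum>e\<in>S. 2)" by simp
  also have "\<dots> \<le> (\<Sum>e\<in>S. card (F e))" using F2 by (intro sum_mono) auto
  also have "\<dots> = card (\<Union>(F ` S))"
    using finS finP by (intro card_UN_disjoint[symmetric]) (auto simp: F_def)
  also have "\<dots> \<le> card P" using finP by (intro card_mono) (auto simp: F_def)
  finally show ?thesis using cP by simp
qed

theorem theorem3p2:
  fixes r :: nat
  assumes "r \<ge> 2"
  shows "gp_e (hypercube_V r) (hypercube_E r) = 2 ^ r"
  unfolding gp_e_def
proof (rule Max_eqI)
  show "finite {card S |S. edge_gp_set (hypercube_V r) (hypercube_E r) S}"
    by (rule finite_subset[of _ "{..2 ^ r}"]) (auto dest: upper)
  show "\<And>y. y \<in> {card S |S. edge_gp_set (hypercube_V r) (hypercube_E r) S} \<Longrightarrow> y \<le> 2 ^ r"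
    using upper by blast
  show "2 ^ r \<in> {card S |S. edge_gp_set (hypercube_V r) (hypercube_E r) S}"
    using S0_gpset[OF assms] card_S0[OF assms] by (metis (mono_tags, lifting) mem_Collect_eq)
qed

end
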